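(* A real symmetric matrix $A$ has tropical rank one if and only if it has symmetric tropical rank one.
   Context: For an $r\times r$ submatrix of a real matrix $A$ with row index set $I$ and column index set $J$, each bijection $\rho:I\to J$ has value $\sum_{i\in I}A_{i,\rho(i)}$; the submatrix is tropically singular if the minimum value is attained by at least two distinct bijections. For symmetric $A$, the submatrix is symmetrically tropically singular if the minimum is attained by at least two distinct monomials $\prod_{i\in I}X_{i,\rho(i)}$, where variables are subject to the identification $X_{i,j}=X_{j,i}$. The tropical rank (resp. symmetric tropical rank) of $A$ is the largest $r$ such that $A$ has an $r\times r$ submatrix (arbitrary row and column sets) that is not tropically singular (resp. not symmetrically tropically singular). *)

theory Defs
  imports "HOL-Analysis.Analysis" "HOL-Library.Multiset"
begin

text \<open>Bijections rho : I -> J, normalised to be extensional (undefined outside I),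
  so that distinct bijections are distinct functions.\<close>
definition bijections :: "'m set \<Rightarrow> 'n set \<Rightarrow> ('m \<Rightarrow> 'n) set" where
  "bijections I J = {\<rho>. bij_betw \<rho> I J \<and> \<rho> \<in> extensional I}"

definition bij_value :: "real^'n^'m \<Rightarrow> 'm set \<Rightarrow> ('m \<Rightarrow> 'n) \<Rightarrow> real" where
  "bij_value A I \<rho> = (\<Sum>i\<in>I. A $ i $ (\<rho> i))"

definition trop_singular :: "real^'n^'m \<Rightarrow> 'm set \<Rightarrow> 'n set \<Rightarrow> bool" where
  "trop_singular A I J \<longleftrightarrow>
     (\<exists>\<rho>1 \<in> bijections I J. \<exists>\<rho>2 \<in> bijections I J. \<rho>1 \<noteq> \<rho>2 \<and>
        (\<forall>\<sigma> \<in> bijections I J. bij_value A I \<rho>1 \<le> bij_value A I \<sigma>) \<and>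
        (\<forall>\<sigma> \<in> bijections I J. bij_value A I \<rho>2 \<le> bij_value A I \<sigma>))"

text \<open>The monomial prod_{i in I} X_{i,rho i} under the identification X_{ij} = X_{ji}:
  a multiset of unordered index pairs, each pair represented as the set {i, rho i}.\<close>
definition sym_monomial :: "'n set \<Rightarrow> ('n \<Rightarrow> 'n) \<Rightarrow> 'n set multiset" where
  "sym_monomial I \<rho> = image_mset (\<lambda>i. {i, \<rho> i}) (mset_set I)"

definition sym_trop_singular :: "real^'n^'n \<Rightarrow> 'n set \<Rightarrow> 'n set \<Rightarrow> bool" where
  "sym_trop_singular A I J \<longleftrightarrow>
     (\<exists>\<rho>1 \<in> bijections I J. \<exists>\<rho>2 \<in> bijections I J.
        sym_monomial I \<rho>1 \<noteq> sym_monomial I \<rho>2 \<and>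
        (\<forall>\<sigma> \<in> bijections I J. bij_value A I \<rho>1 \<le> bij_value A I \<sigma>) \<and>
        (\<forall>\<sigma> \<in> bijections I J. bij_value A I \<rho>2 \<le> bij_value A I \<sigma>))"

definition tropical_rank :: "real^'n::finite^'m::finite \<Rightarrow> nat" where
  "tropical_rank A = Max {r. \<exists>I J. card I = r \<and> card J = r \<and> \<not> trop_singular A I J}"

definition sym_tropical_rank :: "real^'n::finite^'n \<Rightarrow> nat" where
  "sym_tropical_rank A = Max {r. \<exists>I J. card I = r \<and> card J = r \<and> \<not> sym_trop_singular A I J}"

definition symmetric_matrix :: "real^'n^'n \<Rightarrow> bool" where
  "symmetric_matrix A \<longleftrightarrow> (\<forall>i j. A $ i $ j = A $ j $ i)"

end

theory Submission
  imports Defs "HOL-Combinatorics.Transposition"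
begin

lemma max_one_iff:
  fixes S :: "nat set"
  assumes "finite S" "1 \<in> S"
  shows "Max S = 1 \<longleftrightarrow> (\<forall>r\<in>S. r \<le> 1)"
proof
  assume "Max S = 1" then show "\<forall>r\<in>S. r \<le> 1" using assms Max_ge by metis
next
  assume "\<forall>r\<in>S. r \<le> 1"
  then have "Max S \<le> 1" using assms Max_in by blast
  moreover have "1 \<le> Max S" using assms Max_ge by blast
  ultimately show "Max S = 1" by simp
qed

lemma finite_rankset:
  "finite {r. \<exists>I J. card I = r \<and> card J = r \<and> P I J}" for P :: "'m::finite set \<Rightarrow> 'n set \<Rightarrow> bool"
proof (rule finite_subset)
  show "{r. \<exists>I J. card I = r \<and> card J = r \<and> P I J} \<subseteq> {..CARD('m)}"
    using card_mono[OF finite_class.finite_UNIV subset_UNIV] by auto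
qed simp

lemma bij_single:
  assumes "\<rho> \<in> bijections {i} {j}"
  shows "\<rho> = (\<lambda>x. if x = i then j else undefined)"
proof
  fix x
  from assms have b: "bij_betw \<rho> {i} {j}" and e: "\<rho> \<in> extensional {i}"
    by (auto simp: bijections_def)
  have "\<rho> i = j" using bij_betw_apply[OF b] by auto
  then show "\<rho> x = (if x = i then j else undefined)" using e by (auto simp: extensional_def)
qed

lemma bij_single_eq:
  assumes "\<rho>1 \<in> bijections {i} {j}" "\<rho>2 \<in> bijections {i} {j}"
  shows "\<rho>1 = \<rho>2"
  using bij_single[OF assms(1)] bij_single[OF assms(2)] by simp

lemma single_nonsing1:
  "\<not> trop_singular A {i} {j}"
  unfolding trop_singular_def
proof (intro notI, elim bexE conjE)
  fix \<rho>1 \<rho>2 assume h: "\<rho>1 \<in> bijections {i} {j}" "\<rho>2 \<in> bijections {i} {j}" "\<rho>1 \<noteq> \<rho>2"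
  then show False using bij_single_eq[OF h(1,2)] by simp
qed

lemma single_nonsing2:
  "\<not> sym_trop_singular B {i} {j}"
  unfolding sym_trop_singular_def
proof (intro notI, elim bexE conjE)
  fix \<rho>1 \<rho>2 assume h: "\<rho>1 \<in> bijections {i} {j}" "\<rho>2 \<in> bijections {i} {j}"
    "sym_monomial {i} \<rho>1 \<noteq> sym_monomial {i} \<rho>2"
  then show False using bij_single_eq[OF h(1,2)] by simp
qed

lemma one_in_trop: "1 \<in> {r. \<exists>I J. card I = r \<and> card J = r \<and> \<not> trop_singular A I J}"
  by (intro CollectI exI[of _ "{undefined}"] conjI single_nonsing1) simp_all

lemma one_in_sym: "1 \<in> {r. \<exists>I J. card I = r \<and> card J = r \<and> \<not> sym_trop_singular A I J}"
  by (intro CollectI exI[of _ "{undefined}"] conjI single_nonsing2) simp_all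

lemma bij_two:
  assumes "i \<noteq> k" "j \<noteq> l" "\<rho> \<in> bijections {i,k} {j,l}"
  shows "\<rho> = (\<lambda>x. if x = i then j else if x = k then l else undefined)
       \<or> \<rho> = (\<lambda>x. if x = i then l else if x = k then j else undefined)"
proof -
  from assms have b: "bij_betw \<rho> {i,k} {j,l}" and e: "\<rho> \<in> extensional {i,k}"
    by (auto simp: bijections_def)
  have r: "\<rho> i \<in> {j,l}" "\<rho> k \<in> {j,l}" using bij_betw_apply[OF b] by auto
  have d: "\<rho> i \<noteq> \<rho> k" using b assms(1) by (auto simp: bij_betw_def inj_on_def)
  have ou: "\<And>x. x \<noteq> i \<Longrightarrow> x \<noteq> k \<Longrightarrow> \<rho> x = undefined" using e by (auto simp: extensional_def)
  show ?thesis
  proof (cases "\<rho> i = j")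
    case True
    then have "\<rho> k = l" using r d by auto
    then show ?thesis using True ou by (intro disjI1) (auto simp: fun_eq_iff)
  next
    case False
    then have "\<rho> i = l" "\<rho> k = j" using r d by auto
    then show ?thesis using ou by (intro disjI2) (auto simp: fun_eq_iff)
  qed
qed

lemma four_point:
  fixes A :: "real^'n::finite^'m::finite"
  assumes "tropical_rank A = 1"
  shows "A$i$j + A$k$l = A$i$l + A$k$j"
proof (cases "i = k \<or> j = l")
  case True then show ?thesis by auto
next
  case False
  then have ik: "i \<noteq> k" and jl: "j \<noteq> l" by auto
  have "trop_singular A {i,k} {j,l}"
  proof (rule ccontr)
    assume "\<not> trop_singular A {i,k} {j,l}"
    then have "2 \<in> {r. \<exists>I J. card I = r \<and> card J = r \<and> \<not> trop_singular A I J}"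
      using ik jl by (intro CollectI exI[of _ "{i,k}"] exI[of _ "{j,l}"] conjI) simp_all
    then have "2 \<le> tropical_rank A" unfolding tropical_rank_def
      by (rule Max_ge[OF finite_rankset])
    then show False using assms by simp
  qed
  obtain \<rho>1 \<rho>2 where r: "\<rho>1 \<in> bijections {i,k} {j,l}" "\<rho>2 \<in> bijections {i,k} {j,l}"
    "\<rho>1 \<noteq> \<rho>2" "bij_value A {i,k} \<rho>1 \<le> bij_value A {i,k} \<rho>2"
    "bij_value A {i,k} \<rho>2 \<le> bij_value A {i,k} \<rho>1"
  proof -
    from \<open>trop_singular A {i,k} {j,l}\<close> show thesis unfolding trop_singular_def
    proof (elim bexE conjE)
      fix a b assume ab: "a \<in> bijections {i,k} {j,l}" "b \<in> bijections {i,k} {j,l}" "a \<noteq> b"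
        and ma: "\<forall>\<sigma>\<in>bijections {i,k} {j,l}. bij_value A {i,k} a \<le> bij_value A {i,k} \<sigma>"
        and mb: "\<forall>\<sigma>\<in>bijections {i,k} {j,l}. bij_value A {i,k} b \<le> bij_value A {i,k} \<sigma>"
      show thesis
      proof (rule that[OF ab])
        show "bij_value A {i,k} a \<le> bij_value A {i,k} b" using ma ab(2) by (rule bspec)
        show "bij_value A {i,k} b \<le> bij_value A {i,k} a" using mb ab(1) by (rule bspec)
      qed
    qed
  qed
  define f1 where "f1 = (\<lambda>x. if x = i then j else if x = k then l else undefined)"
  define f2 where "f2 = (\<lambda>x. if x = i then l else if x = k then j else undefined)"
  have d1: "\<rho>1 = f1 \<or> \<rho>1 = f2" using bij_two[OF ik jl r(1)] unfolding f1_def f2_def .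
  have d2: "\<rho>2 = f1 \<or> \<rho>2 = f2" using bij_two[OF ik jl r(2)] unfolding f1_def f2_def .
  have "(\<rho>1 = f1 \<and> \<rho>2 = f2) \<or> (\<rho>1 = f2 \<and> \<rho>2 = f1)"
    using d1 d2 r(3) by blast
  then have "bij_value A {i,k} f1 = bij_value A {i,k} f2" using r(4,5) by auto
  then show ?thesis using ik unfolding bij_value_def f1_def f2_def by simp
qed

lemma value_const:
  fixes A :: "real^'n::finite^'m::finite"
  assumes fp: "\<And>i j k l. A$i$j + A$k$l = A$i$l + A$k$j"
    and "\<rho> \<in> bijections I J" "finite I"
  shows "bij_value A I \<rho> = (\<Sum>i\<in>I. A$i$q) + (\<Sum>j\<in>J. A$p$j) - real (card I) * A$p$q"
proof -
  have b: "bij_betw \<rho> I J" using assms by (auto simp: bijections_def)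
  have "bij_value A I \<rho> = (\<Sum>i\<in>I. A$i$q + A$p$(\<rho> i) - A$p$q)"
    unfolding bij_value_def
  proof (rule sum.cong)
    fix x show "A$x$(\<rho> x) = A$x$q + A$p$(\<rho> x) - A$p$q" using fp[of x "\<rho> x" p q] by simp
  qed simp
  also have "\<dots> = (\<Sum>i\<in>I. A$i$q) + (\<Sum>i\<in>I. A$p$(\<rho> i)) - real (card I) * A$p$q"
    by (simp add: sum.distrib sum_subtractf)
  also have "(\<Sum>i\<in>I. A$p$(\<rho> i)) = (\<Sum>j\<in>J. A$p$j)"
    using sum.reindex_bij_betw[OF b] .
  finally show ?thesis .
qed

lemma sym_implies_trop: "sym_trop_singular A I J \<Longrightarrow> trop_singular A I J"
  unfolding sym_trop_singular_def trop_singular_def by metis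

lemma restrict_bij:
  assumes "bij_betw h I J" shows "restrict h I \<in> bijections I J"
  using assms unfolding bijections_def by (simp add: bij_betw_def inj_on_def)

lemma cnt_aux: "Suc (count N a) \<le> count (add_mset a (add_mset b N)) a"
  by simp

lemma two_monomials:
  fixes I J :: "'n::finite set"
  assumes "card I = card J" "2 \<le> card I"
  shows "\<exists>\<rho>1\<in>bijections I J. \<exists>\<rho>2\<in>bijections I J. sym_monomial I \<rho>1 \<noteq> sym_monomial I \<rho>2"
proof -
  have fI: "finite I" and fJ: "finite J" by auto
  obtain h where h: "bij_betw h I J" using finite_same_card_bij[OF fI fJ assms(1)] by blast
  have "I \<noteq> {}" using assms(2) by (metis card.empty not_numeral_le_zero)
  then obtain i where i: "i \<in> I" by blast
  have "card (I - {i}) \<ge> 1" using assms i by simp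
  then have "I - {i} \<noteq> {}" by (metis card.empty not_one_le_zero)
  then obtain k where k: "k \<in> I" "k \<noteq> i" by blast
  define g where "g = h \<circ> Transposition.transpose i k"
  have g: "bij_betw g I J" unfolding g_def
    using bij_betw_trans[OF bij_betw_transpose_iff h] i k by auto
  define R where "R = I - {i,k}"
  have IR: "I = insert i (insert k R)" "i \<notin> insert k R" "k \<notin> R" "finite R"
    using i k unfolding R_def by auto
  have hi: "h i \<noteq> h k" using h i k by (auto simp: bij_betw_def inj_on_def)
  have gR: "\<And>x. x \<in> R \<Longrightarrow> g x = h x" unfolding g_def R_def by auto
  define M where "M = image_mset (\<lambda>x. {x, h x}) (mset_set R)"
  have eR: "image_mset (\<lambda>x. {x, g x}) (mset_set R) = M"
    unfolding M_def by (rule image_mset_cong) (use gR IR in auto)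
  have m1: "sym_monomial I (restrict h I) = add_mset {i, h i} (add_mset {k, h k} M)"
  proof -
    have "sym_monomial I (restrict h I) = sym_monomial I h"
      unfolding sym_monomial_def by (rule image_mset_cong) (use fI in auto)
    also have "\<dots> = add_mset {i, h i} (add_mset {k, h k} M)"
      unfolding sym_monomial_def M_def using IR by (subst IR(1)) simp
    finally show ?thesis .
  qed
  have m2: "sym_monomial I (restrict g I) = add_mset {i, h k} (add_mset {k, h i} M)"
  proof -
    have "sym_monomial I (restrict g I) = sym_monomial I g"
      unfolding sym_monomial_def by (rule image_mset_cong) (use fI in auto)
    also have "\<dots> = add_mset {i, g i} (add_mset {k, g k} (image_mset (\<lambda>x. {x, g x}) (mset_set R)))"
      unfolding sym_monomial_def using IR by (subst IR(1)) simp
    also have "\<dots> = add_mset {i, h k} (add_mset {k, h i} M)"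
      using eR unfolding g_def by simp
    finally show ?thesis .
  qed
  have n1: "{i, h k} \<noteq> {i, h i}" using hi by (auto simp: doubleton_eq_iff)
  have n2: "{k, h i} \<noteq> {i, h i}" using k(2) by (auto simp: doubleton_eq_iff)
  have c1: "count (sym_monomial I (restrict h I)) {i, h i} \<ge> Suc (count M {i, h i})"
    unfolding m1 by (rule cnt_aux)
  have c2: "count (sym_monomial I (restrict g I)) {i, h i} = count M {i, h i}"
    unfolding m2 using n1 n2 by (simp only: count_add_mset if_False)
  have d: "sym_monomial I (restrict h I) \<noteq> sym_monomial I (restrict g I)"
    using c1 c2 by (metis Suc_n_not_le_n)
  show ?thesis
    apply (rule bexI[where x="restrict h I"])
     apply (rule bexI[where x="restrict g I"])
      apply (rule d)
     apply (rule restrict_bij[OF g])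
    apply (rule restrict_bij[OF h])
    done
qed

lemma set_le1:
  fixes P :: "'a set \<Rightarrow> 'b set \<Rightarrow> bool"
  shows "(\<forall>r\<in>{r. \<exists>I J. card I = r \<and> card J = r \<and> \<not> P I J}. r \<le> (1::nat))
   \<longleftrightarrow> (\<forall>I J. card I = card J \<longrightarrow> 2 \<le> card I \<longrightarrow> P I J)"
proof (intro iffI allI impI ballI)
  fix I :: "'a set" and J :: "'b set"
  assume H: "\<forall>r\<in>{r. \<exists>I J. card I = r \<and> card J = r \<and> \<not> P I J}. r \<le> 1"
    and c: "card I = card J" "2 \<le> card I"
  show "P I J"
  proof (rule ccontr)
    assume "\<not> P I J"
    then have "card I \<in> {r. \<exists>I J. card I = r \<and> card J = r \<and> \<not> P I J}"
      using c by (intro CollectI exI[of _ I] exI[of _ J]) simp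
    then have "card I \<le> 1" using H by blast
    then show False using c by simp
  qed
next
  fix r
  assume H: "\<forall>I J. card I = card J \<longrightarrow> 2 \<le> card I \<longrightarrow> P I J"
    and "r \<in> {r. \<exists>I J. card I = r \<and> card J = r \<and> \<not> P I J}"
  then obtain I J where IJ: "card I = r" "card J = r" "\<not> P I J" by blast
  show "r \<le> 1"
  proof (rule ccontr)
    assume "\<not> r \<le> 1"
    then have "2 \<le> card I" using IJ by simp
    then show False using H IJ by metis
  qed
qed

theorem proposition2:
  fixes A :: "real^'n::finite^'n"
  assumes "symmetric_matrix A"
  shows "tropical_rank A = 1 \<longleftrightarrow> sym_tropical_rank A = 1"
proof -
  have T: "tropical_rank A = 1 \<longleftrightarrow> (\<forall>I J. card I = card J \<longrightarrow> 2 \<le> card I \<longrightarrow> trop_singular A I J)"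
    unfolding tropical_rank_def max_one_iff[OF finite_rankset one_in_trop] by (rule set_le1)
  have S: "sym_tropical_rank A = 1 \<longleftrightarrow> (\<forall>I J. card I = card J \<longrightarrow> 2 \<le> card I \<longrightarrow> sym_trop_singular A I J)"
    unfolding sym_tropical_rank_def max_one_iff[OF finite_rankset one_in_sym] by (rule set_le1)
  show ?thesis
  proof
    assume r: "tropical_rank A = 1"
    have fp: "\<And>i j k l. A$i$j + A$k$l = A$i$l + A$k$j" using four_point[OF r] .
    show "sym_tropical_rank A = 1" unfolding S
    proof (intro allI impI)
      fix I J :: "'n set" assume c: "card I = card J" "2 \<le> card I"
      obtain \<rho>1 \<rho>2 where m: "\<rho>1 \<in> bijections I J" "\<rho>2 \<in> bijections I J"
        "sym_monomial I \<rho>1 \<noteq> sym_monomial I \<rho>2" using two_monomials[OF c] by blast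
      define C where "C = (\<Sum>i\<in>I. A$i$undefined) + (\<Sum>j\<in>J. A$undefined$j) - real (card I) * A$undefined$undefined"
      have v: "\<And>\<rho>. \<rho> \<in> bijections I J \<Longrightarrow> bij_value A I \<rho> = C"
        unfolding C_def by (rule value_const[OF fp]) simp_all
      have min: "\<And>\<rho>. \<rho> \<in> bijections I J \<Longrightarrow> \<forall>\<sigma> \<in> bijections I J. bij_value A I \<rho> \<le> bij_value A I \<sigma>"
        using v by simp
      show "sym_trop_singular A I J" unfolding sym_trop_singular_def
        using m min[OF m(1)] min[OF m(2)] by blast
    qed
  next
    assume "sym_tropical_rank A = 1"
    then show "tropical_rank A = 1" unfolding S T using sym_implies_trop by blast
  qed
qed

end
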